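(* Let $R$ be a commutative multiplicative hyperring with identity, let $\alpha$ be a good endomorphism of $R$, and let $I$ be an $\alpha$-prime hyperideal of $R$. Then $E=\{s\in R:\alpha(s)\in I\}$ is an $\alpha$-prime hyperideal of $R$ containing $I$.
   Context: A multiplicative hyperring is an abelian group $(R,+)$ with a hyperoperation $\circ:R\times R\to \mathcal P^*(R)$ (nonempty subsets) such that $a\circ(b\circ c)=(a\circ b)\circ c$, $a\circ(b+c)\subseteq a\circ b+a\circ c$, $(b+c)\circ a\subseteq b\circ a+c\circ a$, and $a\circ(-b)=(-a)\circ b=-(a\circ b)$. Products of subsets are unions of elementwise products. Commutative means $a\circ b=b\circ a$. An identity $1$ satisfies $a\in1\circ a$ for all $a$. A hyperideal is a nonempty $I\subseteq R$ closed under subtraction with $r\circ x\subseteq I$ for $r\in R$, $x\in I$. Standing assumption: every hyperideal is a $\mathbf C$-hyperideal, i.e. for every finite product $A=r_1\circ\cdots\circ r_n$, $A\cap I\ne\emptyset$ implies $A\subseteq I$. A good endomorphism $\alpha$ satisfies $\alpha(x+y)=\alpha(x)+\alpha(y)$ and $\alpha(x\circ y)=\alpha(x)\circ\alpha(y)$; it is applied to sets elementwise. A hyperideal $I$ is $\alpha$-prime if for all $x,y$, $x\circ y\subseteq I$ implies $x\in I$ or $\alpha(y)\in I$. *)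

theory Defs
  imports Main
begin

text \<open>The additive group (R,+) is the whole type 'a (class ab_group_add);
  the hyperoperation is m :: 'a => 'a => 'a set.\<close>

definition hprod :: "('a \<Rightarrow> 'a \<Rightarrow> 'a set) \<Rightarrow> 'a set \<Rightarrow> 'a set \<Rightarrow> 'a set" where
  "hprod m A B = (\<Union>a\<in>A. \<Union>b\<in>B. m a b)"

definition ssum :: "'a::ab_group_add set \<Rightarrow> 'a set \<Rightarrow> 'a set" where
  "ssum A B = {a + b | a b. a \<in> A \<and> b \<in> B}"

definition mult_hyperring :: "('a::ab_group_add \<Rightarrow> 'a \<Rightarrow> 'a set) \<Rightarrow> bool" where
  "mult_hyperring m \<longleftrightarrow>
     (\<forall>a b. m a b \<noteq> {}) \<and>
     (\<forall>a b c. hprod m {a} (m b c) = hprod m (m a b) {c}) \<and>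
     (\<forall>a b c. m a (b + c) \<subseteq> ssum (m a b) (m a c)) \<and>
     (\<forall>a b c. m (b + c) a \<subseteq> ssum (m b a) (m c a)) \<and>
     (\<forall>a b. m a (- b) = uminus ` (m a b) \<and> m (- a) b = uminus ` (m a b))"

definition hcomm :: "('a \<Rightarrow> 'a \<Rightarrow> 'a set) \<Rightarrow> bool" where
  "hcomm m \<longleftrightarrow> (\<forall>a b. m a b = m b a)"

definition has_identity :: "('a \<Rightarrow> 'a \<Rightarrow> 'a set) \<Rightarrow> bool" where
  "has_identity m \<longleftrightarrow> (\<exists>e. \<forall>a. a \<in> m e a)"

text \<open>Finite product r1 o ... o rn of a nonempty list (right-nested;
  by associativity the bracketing is irrelevant).\<close>
fun lprod :: "('a \<Rightarrow> 'a \<Rightarrow> 'a set) \<Rightarrow> 'a list \<Rightarrow> 'a set" where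
  "lprod m [] = {}"
| "lprod m [r] = {r}"
| "lprod m (r # rs) = hprod m {r} (lprod m rs)"

definition hyperideal :: "('a::ab_group_add \<Rightarrow> 'a \<Rightarrow> 'a set) \<Rightarrow> 'a set \<Rightarrow> bool" where
  "hyperideal m I \<longleftrightarrow> I \<noteq> {} \<and> (\<forall>x\<in>I. \<forall>y\<in>I. x - y \<in> I) \<and>
     (\<forall>r. \<forall>x\<in>I. m r x \<subseteq> I)"

definition C_hyperideal :: "('a::ab_group_add \<Rightarrow> 'a \<Rightarrow> 'a set) \<Rightarrow> 'a set \<Rightarrow> bool" where
  "C_hyperideal m I \<longleftrightarrow> hyperideal m I \<and>
     (\<forall>rs. rs \<noteq> [] \<longrightarrow> lprod m rs \<inter> I \<noteq> {} \<longrightarrow> lprod m rs \<subseteq> I)"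

definition good_endo :: "('a::ab_group_add \<Rightarrow> 'a \<Rightarrow> 'a set) \<Rightarrow> ('a \<Rightarrow> 'a) \<Rightarrow> bool" where
  "good_endo m \<alpha> \<longleftrightarrow> (\<forall>x y. \<alpha> (x + y) = \<alpha> x + \<alpha> y) \<and>
     (\<forall>x y. \<alpha> ` (m x y) = m (\<alpha> x) (\<alpha> y))"

definition alpha_prime :: "('a::ab_group_add \<Rightarrow> 'a \<Rightarrow> 'a set) \<Rightarrow> ('a \<Rightarrow> 'a) \<Rightarrow> 'a set \<Rightarrow> bool" where
  "alpha_prime m \<alpha> I \<longleftrightarrow> hyperideal m I \<and>
     (\<forall>x y. m x y \<subseteq> I \<longrightarrow> x \<in> I \<or> \<alpha> y \<in> I)"

end

theory Submission
  imports Defs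
begin

theorem mainTheorem5:
  fixes m :: "'a::ab_group_add \<Rightarrow> 'a \<Rightarrow> 'a set" and \<alpha> :: "'a \<Rightarrow> 'a" and I :: "'a set"
  assumes "mult_hyperring m" and "hcomm m" and "has_identity m"
    and "\<forall>J. hyperideal m J \<longrightarrow> C_hyperideal m J"
    and "good_endo m \<alpha>"
    and "alpha_prime m \<alpha> I"
  shows "alpha_prime m \<alpha> {s. \<alpha> s \<in> I} \<and> I \<subseteq> {s. \<alpha> s \<in> I}"
proof -
  have add: "\<And>x y. \<alpha> (x + y) = \<alpha> x + \<alpha> y" and mul: "\<And>x y. \<alpha> ` (m x y) = m (\<alpha> x) (\<alpha> y)"
    using assms(5) unfolding good_endo_def by auto
  have sub: "\<alpha> (x - y) = \<alpha> x - \<alpha> y" for x y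
  proof -
    have "\<alpha> x = \<alpha> ((x - y) + y)" by simp
    also have "\<dots> = \<alpha> (x - y) + \<alpha> y" by (rule add)
    finally show ?thesis by (simp add: algebra_simps)
  qed
  have hI: "hyperideal m I" and prI: "\<And>x y. m x y \<subseteq> I \<Longrightarrow> x \<in> I \<or> \<alpha> y \<in> I"
    using assms(6) unfolding alpha_prime_def by auto
  have Ine: "I \<noteq> {}" and Isub: "\<And>x y. x \<in> I \<Longrightarrow> y \<in> I \<Longrightarrow> x - y \<in> I"
    and Imul: "\<And>r x. x \<in> I \<Longrightarrow> m r x \<subseteq> I"
    using hI unfolding hyperideal_def by auto
  obtain e where e: "\<And>a. a \<in> m e a" using assms(3) unfolding has_identity_def by auto
  have IE: "I \<subseteq> {s. \<alpha> s \<in> I}"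
  proof
    fix x assume x: "x \<in> I"
    have "m e x \<subseteq> I" using Imul[OF x] .
    then have "e \<in> I \<or> \<alpha> x \<in> I" by (rule prI)
    then show "x \<in> {s. \<alpha> s \<in> I}"
    proof
      assume "e \<in> I"
      then have "m (\<alpha> x) e \<subseteq> I" by (rule Imul)
      moreover have "m (\<alpha> x) e = m e (\<alpha> x)" using assms(2) unfolding hcomm_def by auto
      ultimately show ?thesis using e[of "\<alpha> x"] by auto
    qed simp
  qed
  have hE: "hyperideal m {s. \<alpha> s \<in> I}"
    unfolding hyperideal_def
  proof (intro conjI ballI allI)
    show "{s. \<alpha> s \<in> I} \<noteq> {}" using IE Ine by auto
  next
    fix x y assume "x \<in> {s. \<alpha> s \<in> I}" "y \<in> {s. \<alpha> s \<in> I}"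
    then show "x - y \<in> {s. \<alpha> s \<in> I}" using Isub sub by auto
  next
    fix r x assume "x \<in> {s. \<alpha> s \<in> I}"
    then have "m (\<alpha> r) (\<alpha> x) \<subseteq> I" using Imul by auto
    then have "\<alpha> ` m r x \<subseteq> I" using mul by simp
    then show "m r x \<subseteq> {s. \<alpha> s \<in> I}" by auto
  qed
  have "alpha_prime m \<alpha> {s. \<alpha> s \<in> I}"
    unfolding alpha_prime_def
  proof (intro conjI allI impI)
    fix x y assume "m x y \<subseteq> {s. \<alpha> s \<in> I}"
    then have "\<alpha> ` m x y \<subseteq> I" by auto
    then have "m (\<alpha> x) (\<alpha> y) \<subseteq> I" using mul by simp
    then have "\<alpha> x \<in> I \<or> \<alpha> (\<alpha> y) \<in> I" by (rule prI)
    then show "x \<in> {s. \<alpha> s \<in> I} \<or> \<alpha> y \<in> {s. \<alpha> s \<in> I}" by auto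
  qed (rule hE)
  with IE show ?thesis by simp
qed

end
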